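(* For any $\mathbf A\in\mathbb R^{m\times n}$, $k\in\{1,\dots,n\}$ and $\alpha>0$, if $S\sim\mathrm{DPP}(\frac1\alpha\mathbf A^\top\mathbf A)$ and $S'\sim k\text{-}\mathrm{DPP}(\mathbf A^\top\mathbf A)$, then \[ \mathbb E[\mathrm{Er}_{\mathbf A}(S')]\le\mathbb E[\mathrm{Er}_{\mathbf A}(S)\mid|S|\le k]. \]
   Context: For $\mathbf A\in\mathbb R^{m\times n}$ with columns $\mathbf a_1,\dots,\mathbf a_n$ and $S\subseteq\{1,\dots,n\}$, $\mathbf P_S$ is the orthogonal projection onto $\mathrm{span}\{\mathbf a_i:i\in S\}$ and $\mathrm{Er}_{\mathbf A}(S)=\|\mathbf A-\mathbf P_S\mathbf A\|_F^2$. For a p.s.d. $n\times n$ matrix $\mathbf K$, $S\sim\mathrm{DPP}(\mathbf K)$ is the distribution over all subsets $S\subseteq\{1,\dots,n\}$ with $\Pr(S)=\det(\mathbf K_{S,S})/\det(\mathbf I+\mathbf K)$ ($\mathbf K_{S,S}$ the principal submatrix indexed by $S$, empty determinant $=1$), and $k\text{-}\mathrm{DPP}(\mathbf K)$ is its restriction to subsets of size exactly $k$, i.e., $\Pr(S)\propto\det(\mathbf K_{S,S})$ over $|S|=k$. *)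

theory Defs
  imports "HOL-Analysis.Analysis"
begin

(* Orthogonal projection onto span{a_i : i in S} applied to a vector v
   (for a subspace, the closest point is the orthogonal projection). *)
definition col_proj :: "real^'n^'m \<Rightarrow> 'n set \<Rightarrow> real^'m \<Rightarrow> real^'m" where
  "col_proj A S v = closest_point (span {column i A | i. i \<in> S}) v"

definition proj_mat :: "real^'n^'m \<Rightarrow> 'n set \<Rightarrow> real^'n^'m" where
  "proj_mat A S = (\<chi> r c. col_proj A S (column c A) $ r)"

definition frob_sq :: "real^'n^'m \<Rightarrow> real" where
  "frob_sq M = (\<Sum>r\<in>UNIV. \<Sum>c\<in>UNIV. (M $ r $ c)\<^sup>2)"

definition Er :: "real^'n^'m \<Rightarrow> 'n set \<Rightarrow> real" where
  "Er A S = frob_sq (A - proj_mat A S)"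

(* determinant of the principal submatrix K_{S,S} (Leibniz formula over S);
   equals 1 for S = {} *)
definition pdet :: "real^'n^'n \<Rightarrow> 'n set \<Rightarrow> real" where
  "pdet K S = (\<Sum>p\<in>{p. p permutes S}. of_int (sign p) * (\<Prod>i\<in>S. K $ i $ p i))"

definition dpp_prob :: "real^'n^'n \<Rightarrow> 'n set \<Rightarrow> real" where
  "dpp_prob K S = pdet K S / det (mat 1 + K)"

definition kdpp_prob :: "nat \<Rightarrow> real^'n^'n \<Rightarrow> 'n set \<Rightarrow> real" where
  "kdpp_prob k K S = (if card S = k then pdet K S / (\<Sum>T\<in>{T. card T = k}. pdet K T) else 0)"

definition kdpp_expect :: "nat \<Rightarrow> real^'n^'n \<Rightarrow> ('n set \<Rightarrow> real) \<Rightarrow> real" where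
  "kdpp_expect k K f = (\<Sum>S\<in>{S. card S = k}. kdpp_prob k K S * f S)"

definition dpp_cond_expect_le :: "nat \<Rightarrow> real^'n^'n \<Rightarrow> ('n set \<Rightarrow> real) \<Rightarrow> real" where
  "dpp_cond_expect_le k K f =
     (\<Sum>S\<in>{S. card S \<le> k}. dpp_prob K S * f S) / (\<Sum>S\<in>{S. card S \<le> k}. dpp_prob K S)"

end

theory Submission
  imports Defs
begin

definition Rm :: "real^'n^'n \<Rightarrow> 'n set \<Rightarrow> real^'n^'n" where
  "Rm K T = (\<chi> a b. if a \<in> T \<and> b \<in> T then K$a$b else if a = b then 1 else 0)"

lemma permutes_UNIV_T:
  assumes "p permutes UNIV" "\<forall>x. x \<notin> T \<longrightarrow> p x = x"
  shows "p permutes T"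
  using assms unfolding permutes_def by blast

lemma pdet_Rm: fixes K :: "real^'n^'n" shows "pdet K T = det (Rm K T)"
proof -
  have "det (Rm K T) = (\<Sum>p | p permutes UNIV. of_int (sign p) * (\<Prod>i\<in>UNIV. Rm K T $ i $ p i))"
    by (rule det_def)
  also have "\<dots> = (\<Sum>p | p permutes T. of_int (sign p) * (\<Prod>i\<in>UNIV. Rm K T $ i $ p i))"
  proof (rule sum.mono_neutral_right)
    show "finite {p. p permutes (UNIV::'n set)}" by (rule finite_permutations) simp
    show "{p. p permutes T} \<subseteq> {p. p permutes (UNIV::'n set)}"
      using permutes_subset by blast
    show "\<forall>p\<in>{p. p permutes UNIV} - {p. p permutes T}.
          of_int (sign p) * (\<Prod>i\<in>UNIV. Rm K T $ i $ p i) = 0"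
    proof
      fix p assume p: "p \<in> {p. p permutes UNIV} - {p. p permutes T}"
      then obtain x where x: "x \<notin> T" "p x \<noteq> x" using permutes_UNIV_T by blast
      have "Rm K T $ x $ p x = 0" using x by (simp add: Rm_def)
      then have "(\<Prod>i\<in>UNIV. Rm K T $ i $ p i) = 0" by (intro prod_zero) auto
      then show "of_int (sign p) * (\<Prod>i\<in>UNIV. Rm K T $ i $ p i) = 0" by simp
    qed
  qed
  also have "\<dots> = pdet K T"
    unfolding pdet_def
  proof (rule sum.cong)
    fix p assume "p \<in> {p. p permutes T}"
    then have p: "p permutes T" by simp
    have "(\<Prod>i\<in>UNIV. Rm K T $ i $ p i) = (\<Prod>i\<in>T. K $ i $ p i)"
    proof (rule prod.mono_neutral_cong_right)
      show "\<forall>i\<in>UNIV - T. Rm K T $ i $ p i = 1"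
        using p by (auto simp: Rm_def permutes_not_in)
      show "\<And>i. i \<in> T \<Longrightarrow> Rm K T $ i $ p i = K $ i $ p i"
        using p by (auto simp: Rm_def permutes_in_image)
    qed auto
    then show "of_int (sign p) * (\<Prod>i\<in>UNIV. Rm K T $ i $ p i) = of_int (sign p) * (\<Prod>i\<in>T. K $ i $ p i)"
      by simp
  qed simp
  finally show ?thesis by simp
qed

lemma det_I_plus:
  fixes K :: "real^'n^'n"
  shows "det (mat 1 + K) = (\<Sum>T\<in>Pow UNIV. pdet K T)"
proof -
  let ?d = "\<lambda>i j::'n. if i = j then 1 else (0::real)"
  have "det (mat 1 + K) = (\<Sum>p | p permutes UNIV. of_int (sign p) * (\<Prod>i\<in>UNIV. K $ i $ p i + ?d i (p i)))"
    unfolding det_def by (simp add: mat_def add.commute)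
  also have "\<dots> = (\<Sum>p | p permutes UNIV. \<Sum>B\<in>Pow UNIV. of_int (sign p) * ((\<Prod>i\<in>B. K $ i $ p i) * (\<Prod>i\<in>UNIV - B. ?d i (p i))))"
    by (simp add: prod_add sum_distrib_left)
  also have "\<dots> = (\<Sum>B\<in>Pow UNIV. \<Sum>p | p permutes UNIV. of_int (sign p) * ((\<Prod>i\<in>B. K $ i $ p i) * (\<Prod>i\<in>UNIV - B. ?d i (p i))))"
    by (rule sum.swap)
  also have "\<dots> = (\<Sum>B\<in>Pow UNIV. pdet K B)"
  proof (rule sum.cong[OF refl])
    fix B :: "'n set"
    have "(\<Sum>p | p permutes UNIV. of_int (sign p) * ((\<Prod>i\<in>B. K $ i $ p i) * (\<Prod>i\<in>UNIV - B. ?d i (p i))))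
        = (\<Sum>p | p permutes B. of_int (sign p) * ((\<Prod>i\<in>B. K $ i $ p i) * (\<Prod>i\<in>UNIV - B. ?d i (p i))))"
    proof (rule sum.mono_neutral_right)
      show "finite {p. p permutes (UNIV::'n set)}" by (rule finite_permutations) simp
      show "{p. p permutes B} \<subseteq> {p. p permutes (UNIV::'n set)}"
        using permutes_subset by blast
      show "\<forall>p\<in>{p. p permutes UNIV} - {p. p permutes B}.
          of_int (sign p) * ((\<Prod>i\<in>B. K $ i $ p i) * (\<Prod>i\<in>UNIV - B. ?d i (p i))) = 0"
      proof
        fix p assume p: "p \<in> {p. p permutes UNIV} - {p. p permutes B}"
        then obtain x where x: "x \<notin> B" "p x \<noteq> x" using permutes_UNIV_T by blast
        have "(\<Prod>i\<in>UNIV - B. ?d i (p i)) = 0" using x by (intro prod_zero) (auto intro!: bexI[of _ x])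
        then show "of_int (sign p) * ((\<Prod>i\<in>B. K $ i $ p i) * (\<Prod>i\<in>UNIV - B. ?d i (p i))) = 0" by simp
      qed
    qed
    also have "\<dots> = pdet K B"
      unfolding pdet_def
    proof (rule sum.cong[OF refl])
      fix p assume "p \<in> {p. p permutes B}"
      then have p: "p permutes B" by simp
      have "(\<Prod>i\<in>UNIV - B. ?d i (p i)) = 1"
        using p by (intro prod.neutral) (auto simp: permutes_not_in)
      then show "of_int (sign p) * ((\<Prod>i\<in>B. K $ i $ p i) * (\<Prod>i\<in>UNIV - B. ?d i (p i))) = of_int (sign p) * (\<Prod>i\<in>B. K $ i $ p i)"
        by simp
    qed
    finally show "(\<Sum>p | p permutes UNIV. of_int (sign p) * ((\<Prod>i\<in>B. K $ i $ p i) * (\<Prod>i\<in>UNIV - B. ?d i (p i)))) = pdet K B" .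
  qed
  finally show ?thesis .
qed

lemma pdet_scale:
  fixes K :: "real^'n^'n"
  shows "pdet (c *\<^sub>R K) T = c ^ card T * pdet K T"
  unfolding pdet_def
  by (simp add: sum_distrib_left prod.distrib mult.left_commute)

lemma pdet_empty: "pdet K {} = 1"
  unfolding pdet_def by simp

lemma sym_dot:
  fixes K :: "real^'n^'n"
  assumes "transpose K = K"
  shows "x \<bullet> (K *v y) = (K *v x) \<bullet> y"
proof -
  have "K *v x = x v* K" using transpose_matrix_vector[of K x] assms by simp
  then show ?thesis by (simp add: dot_lmul_matrix)
qed

lemma exists_eigen:
  fixes K :: "real^'n^'n"
  assumes sym: "transpose K = K" and V: "subspace V" and x0: "x0 \<in> V" "x0 \<noteq> 0"
    and inv: "\<forall>x\<in>V. K *v x \<in> V"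
  shows "\<exists>v\<in>V. norm v = 1 \<and> (\<exists>l. K *v v = l *\<^sub>R v)"
proof -
  define q where "q x = x \<bullet> (K *v x)" for x
  define S where "S = V \<inter> sphere 0 1"
  have cS: "compact S" unfolding S_def
    by (metis Int_commute compact_Int_closed compact_sphere closed_subspace V)
  have u0: "(1 / norm x0) *\<^sub>R x0 \<in> S"
    using x0 V unfolding S_def by (auto simp: subspace_scale)
  then have neS: "S \<noteq> {}" by auto
  have "continuous_on S q" unfolding q_def by (intro continuous_intros)
  then obtain v where v: "v \<in> S" and vmax: "\<forall>y\<in>S. q y \<le> q v"
    using continuous_attains_sup[OF cS neS] by blast
  define l where "l = q v"
  have vV: "v \<in> V" and nv: "norm v = 1" using v by (auto simp: S_def)
  have vv: "v \<bullet> v = 1" using nv by (simp add: dot_square_norm)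
  have qhom: "q (c *\<^sub>R x) = c^2 * q x" for c x
    unfolding q_def by (simp add: matrix_vector_mult_scaleR power2_eq_square)
  have bound: "q x \<le> l * (x \<bullet> x)" if "x \<in> V" for x
  proof (cases "x = 0")
    case True then show ?thesis by (simp add: q_def)
  next
    case False
    define u where "u = (1 / norm x) *\<^sub>R x"
    have "u \<in> S" using False that V unfolding S_def u_def by (auto simp: subspace_scale)
    then have "q u \<le> l" using vmax l_def by auto
    moreover have "x = norm x *\<^sub>R u" using False by (simp add: u_def)
    then have "q x = (norm x)^2 * q u" by (metis qhom)
    ultimately show ?thesis using False
      by (simp add: dot_square_norm mult_left_mono mult.commute)
  qed
  define w where "w = K *v v - l *\<^sub>R v"
  have wV: "w \<in> V" unfolding w_def using inv vV V
    by (simp add: subspace_diff subspace_scale)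
  define c where "c = q w - l * (w \<bullet> w)"
  have key: "2 * t * (w \<bullet> w) + t^2 * c \<le> 0" for t
  proof -
    have "v + t *\<^sub>R w \<in> V" using vV wV V by (simp add: subspace_add subspace_scale)
    then have b: "q (v + t *\<^sub>R w) \<le> l * ((v + t *\<^sub>R w) \<bullet> (v + t *\<^sub>R w))" by (rule bound)
    have e1: "q (v + t *\<^sub>R w) = l + 2 * t * ((K *v v) \<bullet> w) + t^2 * q w"
      unfolding q_def l_def using sym_dot[OF sym, of v w]
      by (simp add: matrix_vector_right_distrib matrix_vector_mult_scaleR inner_add_left inner_add_right
          power2_eq_square algebra_simps inner_commute)
    have e2: "(v + t *\<^sub>R w) \<bullet> (v + t *\<^sub>R w) = 1 + 2 * t * (v \<bullet> w) + t^2 * (w \<bullet> w)"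
      using vv by (simp add: inner_add_left inner_add_right power2_eq_square algebra_simps inner_commute)
    have e3: "(K *v v) \<bullet> w = w \<bullet> w + l * (v \<bullet> w)"
      unfolding w_def by (simp add: inner_diff_left inner_diff_right inner_commute algebra_simps)
    have b2: "l + 2 * t * (w \<bullet> w + l * (v \<bullet> w)) + t^2 * q w \<le> l * (1 + 2 * t * (v \<bullet> w) + t^2 * (w \<bullet> w))"
      using b unfolding e1 e2 e3 .
    then show ?thesis unfolding c_def by (simp add: algebra_simps)
  qed
  have "w = 0"
  proof (rule ccontr)
    assume "w \<noteq> 0"
    then have W: "w \<bullet> w > 0" by simp
    define t where "t = (w \<bullet> w) / (\<bar>c\<bar> + 1)"
    have t: "t > 0" using W by (simp add: t_def)
    have "2 * t * (w \<bullet> w) + t^2 * c \<le> 0" by (rule key)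
    then have "t * (2 * (w \<bullet> w) + t * c) \<le> 0" by (simp add: power2_eq_square algebra_simps)
    then have h: "2 * (w \<bullet> w) + t * c \<le> 0" using t by (simp add: mult_le_0_iff)
    have "t * c \<ge> - (t * \<bar>c\<bar>)" proof -
      have "- \<bar>c\<bar> \<le> c" by simp
      then have "t * (- \<bar>c\<bar>) \<le> t * c" using t by (intro mult_left_mono) auto
      then show ?thesis by simp
    qed
    moreover have "t * \<bar>c\<bar> < w \<bullet> w"
    proof -
      have "t * \<bar>c\<bar> = (w \<bullet> w) * (\<bar>c\<bar> / (\<bar>c\<bar> + 1))" by (simp add: t_def)
      also have "\<dots> < (w \<bullet> w) * 1" using W by (intro mult_strict_left_mono) auto
      finally show ?thesis by simp
    qed
    ultimately show False using h W by linarith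
  qed
  then have "K *v v = l *\<^sub>R v" unfolding w_def by simp
  then show ?thesis using vV nv by blast
qed

lemma eigen_basis_sub:
  fixes K :: "real^'n^'n"
  assumes sym: "transpose K = K"
  shows "subspace V \<Longrightarrow> (\<forall>x\<in>V. K *v x \<in> V) \<Longrightarrow> dim V = d \<Longrightarrow>
    \<exists>B. B \<subseteq> V \<and> finite B \<and> card B = d \<and> pairwise orthogonal B \<and> (\<forall>x\<in>B. norm x = 1)
        \<and> (\<forall>x\<in>B. \<exists>l. K *v x = l *\<^sub>R x)"
proof (induction d arbitrary: V)
  case 0
  then show ?case by (intro exI[of _ "{}"]) auto
next
  case (Suc d)
  have "\<not> V \<subseteq> {0}" using Suc.prems(3) dim_eq_0[of V] by simp
  then obtain x0 where x0: "x0 \<in> V" "x0 \<noteq> 0" by blast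
  obtain v l where vV: "v \<in> V" and nv: "norm v = 1" and ev: "K *v v = l *\<^sub>R v"
    using exists_eigen[OF sym Suc.prems(1) x0 Suc.prems(2)] by blast
  have v0: "v \<noteq> 0" using nv by auto
  define V' where "V' = {y \<in> V. \<forall>x\<in>span {v}. orthogonal x y}"
  have memV': "y \<in> V' \<longleftrightarrow> y \<in> V \<and> v \<bullet> y = 0" for y
  proof
    assume "y \<in> V'" then show "y \<in> V \<and> v \<bullet> y = 0"
      unfolding V'_def orthogonal_def using span_base[of v "{v}"] by auto
  next
    assume "y \<in> V \<and> v \<bullet> y = 0" then show "y \<in> V'"
      unfolding V'_def orthogonal_def span_singleton by auto
  qed
  have sub1: "span {v} \<subseteq> V" using vV Suc.prems(1) by (intro span_minimal) auto
  have "dim V' + dim (span {v}) = dim V"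
    unfolding V'_def by (rule dim_subspace_orthogonal_to_vectors[OF subspace_span Suc.prems(1) sub1])
  then have dV': "dim V' = d" using Suc.prems(3) v0 by (simp add: dim_span dim_singleton)
  have sV': "subspace V'"
    using Suc.prems(1) unfolding subspace_def by (auto simp: memV' inner_add_right)
  have iV': "\<forall>x\<in>V'. K *v x \<in> V'"
  proof
    fix x assume "x \<in> V'"
    then have x: "x \<in> V" "v \<bullet> x = 0" using memV' by auto
    have "v \<bullet> (K *v x) = (K *v v) \<bullet> x" by (rule sym_dot[OF sym])
    also have "\<dots> = 0" using x ev by simp
    finally show "K *v x \<in> V'" using Suc.prems(2) x memV' by auto
  qed
  obtain B where B: "B \<subseteq> V'" "finite B" "card B = d" "pairwise orthogonal B" "\<forall>x\<in>B. norm x = 1"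
      "\<forall>x\<in>B. \<exists>l. K *v x = l *\<^sub>R x"
    using Suc.IH[OF sV' iV' dV'] by blast
  have vB: "v \<notin> B"
  proof
    assume "v \<in> B" then have "v \<bullet> v = 0" using B(1) memV' by auto
    then show False using v0 by simp
  qed
  have orth: "\<forall>y\<in>B. orthogonal v y \<and> orthogonal y v"
    using B(1) memV' by (auto simp: orthogonal_def inner_commute)
  show ?case
    apply (rule exI[of _ "insert v B"])
    using B vB vV nv ev orth memV' by (auto simp: pairwise_insert)
qed

lemma eigen_basis:
  fixes K :: "real^'n^'n"
  assumes sym: "transpose K = K"
  shows "\<exists>B. finite B \<and> card B = CARD('n) \<and> pairwise orthogonal B \<and> (\<forall>x\<in>B. norm x = 1)
        \<and> (\<forall>x\<in>B. \<exists>l. K *v x = l *\<^sub>R x)"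
  using eigen_basis_sub[OF sym subspace_UNIV, of "CARD('n)"] by (auto simp: dim_UNIV)

lemma pdet_diag:
  fixes l :: "'n::finite \<Rightarrow> real"
  shows "pdet ((\<chi> a b. if a = b then l a else 0)::real^'n^'n) T = (\<Prod>i\<in>T. l i)"
proof -
  let ?D = "(\<chi> a b. if a = b then l a else 0)::real^'n^'n"
  have "pdet ?D T = (\<Sum>p\<in>{id}. of_int (sign p) * (\<Prod>i\<in>T. ?D $ i $ p i))"
    unfolding pdet_def
  proof (rule sum.mono_neutral_right)
    show "finite {p. p permutes T}" by (rule finite_permutations) simp
    show "{id} \<subseteq> {p. p permutes T}" by (simp add: permutes_id)
    show "\<forall>p\<in>{p. p permutes T} - {id}. of_int (sign p) * (\<Prod>i\<in>T. ?D $ i $ p i) = 0"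
    proof
      fix p assume p: "p \<in> {p. p permutes T} - {id}"
      then have "p \<noteq> id" by auto
      then obtain x where x: "p x \<noteq> x" by (auto simp: fun_eq_iff)
      have pT: "p permutes T" using p by simp
      have "x \<in> T"
      proof (rule ccontr)
        assume "x \<notin> T" then have "p x = x" by (rule permutes_not_in[OF pT])
        then show False using x by simp
      qed
      then have "(\<Prod>i\<in>T. ?D $ i $ p i) = 0" using x by (intro prod_zero) (auto intro!: bexI[of _ x])
      then show "of_int (sign p) * (\<Prod>i\<in>T. ?D $ i $ p i) = 0" by simp
    qed
  qed
  also have "\<dots> = (\<Prod>i\<in>T. l i)" by (simp add: sign_id)
  finally show ?thesis .
qed

lemma coeff_compare:
  fixes f g :: "'n::finite set \<Rightarrow> real"
  assumes "\<And>t. (\<Sum>T\<in>Pow UNIV. t ^ card T * f T) = (\<Sum>T\<in>Pow UNIV. t ^ card T * g T)"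
  shows "(\<Sum>T | card T = j. f T) = (\<Sum>T | card T = j. g T)"
proof -
  define N where "N = CARD('n)"
  have grp: "(\<Sum>T\<in>Pow UNIV. t ^ card T * h T) = (\<Sum>j\<le>N. (\<Sum>T | card T = j. h T) * t ^ j)" for h :: "'n set \<Rightarrow> real" and t
  proof -
    have "(\<Sum>T\<in>Pow UNIV. t ^ card T * h T) = (\<Sum>j\<in>{..N}. \<Sum>T\<in>{T\<in>Pow UNIV. card T = j}. t ^ card T * h T)"
      by (rule sum.group[symmetric]) (auto simp: N_def intro: card_mono)
    also have "\<dots> = (\<Sum>j\<le>N. (\<Sum>T | card T = j. h T) * t ^ j)"
    proof (rule sum.cong[OF refl])
      fix j
      have "(\<Sum>T\<in>{T\<in>Pow UNIV. card T = j}. t ^ card T * h T) = (\<Sum>T | card T = j. t ^ j * h T)"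
        by (rule sum.cong) auto
      also have "\<dots> = (\<Sum>T | card T = j. h T) * t ^ j"
        by (simp add: sum_distrib_left mult.commute)
      finally show "(\<Sum>T\<in>{T\<in>Pow UNIV. card T = j}. t ^ card T * h T) = (\<Sum>T | card T = j. h T) * t ^ j" .
    qed
    finally show ?thesis .
  qed
  have "\<forall>t. (\<Sum>j\<le>N. (\<Sum>T | card T = j. f T) * t ^ j) = (\<Sum>j\<le>N. (\<Sum>T | card T = j. g T) * t ^ j)"
  proof (intro allI)
    fix t
    show "(\<Sum>j\<le>N. (\<Sum>T | card T = j. f T) * t ^ j) = (\<Sum>j\<le>N. (\<Sum>T | card T = j. g T) * t ^ j)"
      using assms[of t] unfolding grp .
  qed
  then have c: "\<forall>j\<le>N. (\<Sum>T | card T = j. f T) = (\<Sum>T | card T = j. g T)"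
    using polyfun_eq_coeffs[where n=N and c="\<lambda>j. (\<Sum>T | card T = j. f T)" and d="\<lambda>j. (\<Sum>T | card T = j. g T)"] by blast
  show ?thesis
  proof (cases "j \<le> N")
    case True then show ?thesis using c by simp
  next
    case False
    have cN: "card T \<le> N" for T :: "'n set" unfolding N_def by (rule card_mono) auto
    have "card T \<noteq> j" for T :: "'n set" using cN[of T] False by linarith
    then have "{T::'n set. card T = j} = {}" by blast
    then show ?thesis by simp
  qed
qed

lemma matrix_add_rdistrib':
  fixes A B C :: "real^'n^'n"
  shows "(A + B) ** C = A ** C + B ** C"
  by (simp add: matrix_matrix_mult_def vec_eq_iff distrib_right sum.distrib)

lemma dot_transpose:
  fixes A :: "real^'n^'m"
  shows "x \<bullet> (transpose A *v y) = (A *v x) \<bullet> y"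
  by (simp add: transpose_matrix_vector inner_commute[of x] dot_lmul_matrix inner_commute[of y])

lemma esym_gram:
  fixes A :: "real^'n^'m"
  shows "\<exists>l::'n \<Rightarrow> real. (\<forall>i. 0 \<le> l i) \<and>
    (\<forall>j. (\<Sum>T | card T = j. pdet (transpose A ** A) T) = (\<Sum>T | card T = j. \<Prod>i\<in>T. l i))"
proof -
  define K where "K = transpose A ** A"
  have sym: "transpose K = K" by (simp add: K_def matrix_transpose_mul)
  obtain B where B: "finite B" "card B = CARD('n)" "pairwise orthogonal B" "\<forall>x\<in>B. norm x = 1"
    "\<forall>x\<in>B. \<exists>l. K *v x = l *\<^sub>R x"
    using eigen_basis[OF sym] by blast
  obtain f where f: "bij_betw f (UNIV::'n set) B"
    using finite_same_card_bij[of "UNIV::'n set" B] B(1,2) by auto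
  have fB: "f i \<in> B" for i using f by (auto simp: bij_betw_def)
  have finj: "f i = f j \<Longrightarrow> i = j" for i j using f by (auto simp: bij_betw_def inj_on_def)
  define l where "l i = (SOME c. K *v f i = c *\<^sub>R f i)" for i
  have ev: "K *v f i = l i *\<^sub>R f i" for i
  proof -
    have "\<exists>c. K *v f i = c *\<^sub>R f i" using B(5) fB[of i] by blast
    then show ?thesis unfolding l_def by (rule someI_ex)
  qed
  have unit: "f i \<bullet> f i = 1" for i using B(4) fB[of i] by (simp add: dot_square_norm)
  have orth: "i \<noteq> j \<Longrightarrow> f i \<bullet> f j = 0" for i j
    using B(3) fB[of i] fB[of j] finj[of i j] by (auto simp: pairwise_def orthogonal_def)
  have lpos: "0 \<le> l i" for i
  proof -
    have "l i = f i \<bullet> (l i *\<^sub>R f i)" using unit[of i] by simp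
    also have "\<dots> = f i \<bullet> (K *v f i)" by (simp add: ev)
    also have "\<dots> = (A *v f i) \<bullet> (A *v f i)"
      unfolding K_def matrix_vector_mul_assoc[symmetric] by (rule dot_transpose)
    finally show ?thesis by simp
  qed
  define Q :: "real^'n^'n" where "Q = (\<chi> a b. f b $ a)"
  define D :: "real^'n^'n" where "D = (\<chi> a b. if a = b then l a else 0)"
  have QtQ: "transpose Q ** Q = mat 1"
  proof -
    have "(transpose Q ** Q) $ a $ b = (if a = b then 1 else 0)" for a b
    proof -
      have "(transpose Q ** Q) $ a $ b = f a \<bullet> f b"
        by (simp add: matrix_matrix_mult_def Q_def transpose_def inner_vec_def)
      then show ?thesis using unit orth by auto
    qed
    then show ?thesis by (simp add: vec_eq_iff mat_def)
  qed
  have KQ: "K ** Q = Q ** D"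
  proof -
    have "(K ** Q) $ a $ b = (Q ** D) $ a $ b" for a b
    proof -
      have "(K ** Q) $ a $ b = (K *v f b) $ a"
        by (simp add: matrix_matrix_mult_def matrix_vector_mult_def Q_def)
      also have "\<dots> = l b * f b $ a" by (simp add: ev)
      also have "\<dots> = (Q ** D) $ a $ b"
        by (simp add: matrix_matrix_mult_def Q_def D_def if_distrib cong: if_cong)
      finally show ?thesis .
    qed
    then show ?thesis by (simp add: vec_eq_iff)
  qed
  have detQ: "det Q * det Q = 1"
    using arg_cong[OF QtQ, of det] by (simp add: det_mul det_transpose det_I)
  have "det (mat 1 + t *\<^sub>R K) = det (mat 1 + t *\<^sub>R D)" for t
  proof -
    have "transpose Q ** ((mat 1 + t *\<^sub>R K) ** Q) = mat 1 + t *\<^sub>R D"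
      by (simp add: matrix_add_rdistrib' matrix_add_ldistrib scalar_matrix_assoc[symmetric]
          matrix_scalar_ac KQ matrix_mul_assoc QtQ)
    then have "det (mat 1 + t *\<^sub>R D) = det (transpose Q) * (det (mat 1 + t *\<^sub>R K) * det Q)"
      by (metis det_mul)
    also have "\<dots> = det (mat 1 + t *\<^sub>R K) * (det Q * det Q)" by (simp add: det_transpose)
    finally show ?thesis using detQ by simp
  qed
  then have "(\<Sum>T\<in>Pow UNIV. t ^ card T * pdet K T) = (\<Sum>T\<in>Pow UNIV. t ^ card T * (\<Prod>i\<in>T. l i))" for t
    using det_I_plus[of "t *\<^sub>R K"] det_I_plus[of "t *\<^sub>R D"]
    by (simp add: pdet_scale D_def pdet_diag)
  then have "(\<Sum>T | card T = j. pdet K T) = (\<Sum>T | card T = j. \<Prod>i\<in>T. l i)" for j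
    by (rule coeff_compare)
  then show ?thesis using lpos unfolding K_def by blast
qed

definition es :: "('a \<Rightarrow> real) \<Rightarrow> 'a set \<Rightarrow> nat \<Rightarrow> real" where
  "es l I j = (\<Sum>B | B \<subseteq> I \<and> card B = j. \<Prod>i\<in>B. l i)"

lemma T2_ineq:
  fixes M x0 x1 x2 :: real
  assumes "M \<ge> 0" "x0 \<ge> 0" "x2 \<ge> 0" "(M+1) * x1^2 \<ge> (M+2) * x0 * x2"
  shows "(M+2) * x1^2 - (M+3) * x0 * x2 \<ge> 0"
proof -
  have p: "x0 * x2 \<ge> 0" using assms by simp
  have "(M+1) * ((M+2) * x1^2 - (M+3) * x0 * x2) = (M+2) * ((M+1) * x1^2) - (M+1)*(M+3) * (x0 * x2)"
    by (simp add: algebra_simps)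
  also have "\<dots> \<ge> (M+2) * ((M+2) * x0 * x2) - (M+1)*(M+3) * (x0 * x2)"
    using assms(1,4) by (simp add: mult_left_mono)
  also have "(M+2) * ((M+2) * x0 * x2) - (M+1)*(M+3) * (x0 * x2) = x0 * x2"
    by (simp add: algebra_simps)
  finally have "(M+1) * ((M+2) * x1^2 - (M+3) * x0 * x2) \<ge> 0" using p by linarith
  moreover have "M + 1 > 0" using assms(1) by simp
  ultimately show ?thesis by (simp add: zero_le_mult_iff)
qed

lemma T1_ineq:
  fixes M x0 x1 x2 x3 :: real
  assumes "M \<ge> 0" "x0 \<ge> 0" "x1 \<ge> 0" "x2 \<ge> 0" "x3 \<ge> 0"
    and H0: "(M+1) * x1^2 \<ge> (M+2) * x0 * x2" and H1: "(M+2) * x2^2 \<ge> (M+3) * x1 * x3"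
    and Z1: "x1 = 0 \<Longrightarrow> x2 = 0" and Z2: "x2 = 0 \<Longrightarrow> x3 = 0"
  shows "(M+1) * x1 * x2 - (M+3) * x0 * x3 \<ge> 0"
proof (cases "x1 * x2 = 0")
  case True
  then have "x2 = 0" using Z1 by auto
  then have "x3 = 0" using Z2 by simp
  then show ?thesis using \<open>x2 = 0\<close> by simp
next
  case False
  then have P: "x1 * x2 > 0" using assms by (simp add: less_le)
  have a: "0 \<le> (M+2) * x0 * x2" using assms by simp
  have b: "0 \<le> (M+3) * x1 * x3" using assms by simp
  have "((M+2) * x0 * x2) * ((M+3) * x1 * x3) \<le> ((M+1) * x1^2) * ((M+2) * x2^2)"
    using mult_mono[OF H0 H1] a b by (meson mult_mono order_trans H0 H1 a b)
  then have "0 \<le> ((M+1) * x1^2) * ((M+2) * x2^2) - ((M+2) * x0 * x2) * ((M+3) * x1 * x3)" by simp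
  also have "((M+1) * x1^2) * ((M+2) * x2^2) - ((M+2) * x0 * x2) * ((M+3) * x1 * x3)
      = ((M+2) * (x1 * x2)) * ((M+1) * x1 * x2 - (M+3) * x0 * x3)"
    by (simp add: algebra_simps power2_eq_square)
  finally have "0 \<le> ((M+2) * (x1 * x2)) * ((M+1) * x1 * x2 - (M+3) * x0 * x3)" .
  moreover have "(M+2) * (x1 * x2) > 0" using P assms(1) by simp
  ultimately show ?thesis by (simp add: zero_le_mult_iff)
qed

definition ULC :: "(nat \<Rightarrow> real) \<Rightarrow> bool" where
  "ULC a \<longleftrightarrow> (\<forall>i. a i \<ge> 0) \<and> a 0 = 1 \<and>
     (\<forall>i. real (i+1) * (a (i+1))^2 \<ge> real (i+2) * a i * a (i+2)) \<and>
     (\<forall>i. a i = 0 \<longrightarrow> a (Suc i) = 0)"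

lemma ULC_step:
  assumes U: "ULC a" and y: "y \<ge> 0"
    and b0: "b 0 = a 0" and bS: "\<And>j. b (Suc j) = a (Suc j) + y * a j"
  shows "ULC b"
proof -
  have apos: "\<And>i. a i \<ge> 0" and a0: "a 0 = 1"
    and H: "\<And>i. real (i+1) * (a (i+1))^2 \<ge> real (i+2) * a i * a (i+2)"
    and Z: "\<And>i. a i = 0 \<Longrightarrow> a (Suc i) = 0" using U unfolding ULC_def by auto
  have bpos: "b i \<ge> 0" for i using apos y by (cases i) (auto simp: b0 bS)
  have bZ: "b i = 0 \<longrightarrow> b (Suc i) = 0" for i
  proof (cases i)
    case 0 then show ?thesis using b0 a0 by simp
  next
    case (Suc j)
    show ?thesis
    proof
      assume "b i = 0"
      then have "a (Suc j) + y * a j = 0" using Suc bS by simp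
      moreover have "y * a j \<ge> 0" using y apos by simp
      ultimately have "a (Suc j) = 0" "y * a j = 0" using apos[of "Suc j"] by linarith+
      then have "a (Suc (Suc j)) = 0" using Z by blast
      then show "b (Suc i) = 0" using Suc bS \<open>a (Suc j) = 0\<close> by simp
    qed
  qed
  have bH: "real (i+1) * (b (i+1))^2 \<ge> real (i+2) * b i * b (i+2)" for i
  proof (cases i)
    case 0
    have h: "a 1 ^ 2 \<ge> 2 * a 2" using H[of 0] a0 by (simp add: numeral_2_eq_2)
    have "real (i+2) * b i * b (i+2) = 2 * (a 2 + y * a 1)"
      using 0 b0 a0 bS[of 1] by (simp add: numeral_2_eq_2)
    also have "\<dots> \<le> (a 1 + y)^2"
      using h y by (simp add: power2_eq_square algebra_simps) (smt (verit) mult_nonneg_nonneg y)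
    also have "(a 1 + y)^2 = real (i+1) * (b (i+1))^2"
      using 0 bS[of 0] a0 by simp
    finally show ?thesis .
  next
    case (Suc m)
    define M where "M = real m"
    have M: "M \<ge> 0" by (simp add: M_def)
    define x0 x1 x2 x3 where "x0 = a m" "x1 = a (m+1)" "x2 = a (m+2)" "x3 = a (m+3)"
    have xs: "x0 \<ge> 0" "x1 \<ge> 0" "x2 \<ge> 0" "x3 \<ge> 0" using apos by (simp_all add: x0_x1_x2_x3_def)
    have H0: "(M+1) * x1^2 \<ge> (M+2) * x0 * x2" using H[of m]
      by (simp add: M_def x0_x1_x2_x3_def add.commute)
    have H1: "(M+2) * x2^2 \<ge> (M+3) * x1 * x3" using H[of "m+1"]
      by (simp add: M_def x0_x1_x2_x3_def add.commute numeral_3_eq_3 numeral_2_eq_2)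
    have Z1: "x1 = 0 \<Longrightarrow> x2 = 0" using Z[of "m+1"] by (simp add: x0_x1_x2_x3_def numeral_2_eq_2)
    have Z2: "x2 = 0 \<Longrightarrow> x3 = 0" using Z[of "m+2"] by (simp add: x0_x1_x2_x3_def numeral_2_eq_2 numeral_3_eq_3)
    have t0: "(M+2) * x2^2 - (M+3) * x1 * x3 \<ge> 0" using H1 by simp
    have t1: "(M+1) * x1 * x2 - (M+3) * x0 * x3 \<ge> 0"
      by (rule T1_ineq[OF M xs H0 H1 Z1 Z2])
    have t2: "(M+2) * x1^2 - (M+3) * x0 * x2 \<ge> 0"
      by (rule T2_ineq[OF M xs(1) xs(3) H0])
    have bi: "b i = x1 + y * x0" "b (i+1) = x2 + y * x1" "b (i+2) = x3 + y * x2"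
      using Suc bS by (simp_all add: x0_x1_x2_x3_def numeral_2_eq_2 numeral_3_eq_3)
    have ri: "real (i+1) = M + 2" "real (i+2) = M + 3" using Suc by (simp_all add: M_def)
    have "real (i+1) * (b (i+1))^2 - real (i+2) * b i * b (i+2)
        = ((M+2) * x2^2 - (M+3) * x1 * x3) + y * ((M+1) * x1 * x2 - (M+3) * x0 * x3)
          + y^2 * ((M+2) * x1^2 - (M+3) * x0 * x2)"
      unfolding bi ri by (simp add: algebra_simps power2_eq_square)
    also have "\<dots> \<ge> 0" using t0 t1 t2 y by simp
    finally show ?thesis by simp
  qed
  show ?thesis unfolding ULC_def using bpos bZ bH b0 a0 by auto
qed

lemma es_empty: "es l {} j = (if j = 0 then 1 else 0)"
proof -
  have h: "{B. B \<subseteq> {} \<and> card B = j} = (if j = 0 then {{}} else {})" by auto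
  show ?thesis unfolding es_def by (subst h) simp
qed

lemma es_zero: "finite I \<Longrightarrow> es l I 0 = 1"
proof -
  assume fI: "finite I"
  have "B \<subseteq> I \<and> card B = 0 \<longleftrightarrow> B = {}" for B using finite_subset[of B I] fI by auto
  then have h: "{B. B \<subseteq> I \<and> card B = 0} = {{}}" by auto
  show ?thesis unfolding es_def by (subst h) simp
qed

lemma es_insert:
  assumes fI: "finite I" and y: "y \<notin> I"
  shows "es l (insert y I) (Suc j) = es l I (Suc j) + l y * es l I j"
proof -
  let ?L = "{B. B \<subseteq> insert y I \<and> card B = Suc j}"
  let ?A = "{B. B \<subseteq> I \<and> card B = Suc j}"
  let ?C = "{B. B \<subseteq> I \<and> card B = j}"
  have finA: "finite ?A" by (rule finite_subset[of _ "Pow I"]) (auto simp: fI)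
  have finC: "finite ?C" by (rule finite_subset[of _ "Pow I"]) (auto simp: fI)
  have split: "?L = ?A \<union> insert y ` ?C"
  proof (intro equalityI subsetI)
    fix B assume B: "B \<in> ?L"
    then have fB: "finite B" using fI by (auto intro: finite_subset)
    show "B \<in> ?A \<union> insert y ` ?C"
    proof (cases "y \<in> B")
      case True
      have "B = insert y (B - {y})" using True by auto
      moreover have "B - {y} \<in> ?C" using B True fB by auto
      ultimately show ?thesis by blast
    next
      case False then show ?thesis using B by auto
    qed
  next
    fix B assume "B \<in> ?A \<union> insert y ` ?C"
    then show "B \<in> ?L"
    proof
      assume "B \<in> ?A" then show ?thesis by auto
    next
      assume "B \<in> insert y ` ?C"
      then obtain C where C: "C \<in> ?C" "B = insert y C" by blast
      have "finite C" "y \<notin> C" using C fI y by (auto intro: finite_subset)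
      then show ?thesis using C by auto
    qed
  qed
  have disj: "?A \<inter> insert y ` ?C = {}" using y by auto
  have inj: "inj_on (insert y) ?C"
  proof (rule inj_onI)
    fix C C' assume a: "C \<in> ?C" "C' \<in> ?C" "insert y C = insert y C'"
    have "y \<notin> C" "y \<notin> C'" using a(1,2) y by auto
    then show "C = C'" using a(3) insert_ident by metis
  qed
  have "es l (insert y I) (Suc j) = (\<Sum>B\<in>?A. \<Prod>i\<in>B. l i) + (\<Sum>B\<in>insert y ` ?C. \<Prod>i\<in>B. l i)"
    unfolding es_def split using finA finC disj by (simp add: sum.union_disjoint)
  also have "(\<Sum>B\<in>insert y ` ?C. \<Prod>i\<in>B. l i) = (\<Sum>C\<in>?C. \<Prod>i\<in>insert y C. l i)"
    by (simp add: sum.reindex[OF inj])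
  also have "\<dots> = (\<Sum>C\<in>?C. l y * (\<Prod>i\<in>C. l i))"
  proof (rule sum.cong[OF refl])
    fix C assume "C \<in> ?C"
    then have "finite C" "y \<notin> C" using fI y by (auto intro: finite_subset)
    then show "(\<Prod>i\<in>insert y C. l i) = l y * (\<Prod>i\<in>C. l i)" by simp
  qed
  finally show ?thesis unfolding es_def by (simp add: sum_distrib_left)
qed

lemma es_ULC:
  assumes "finite I" and lpos: "\<forall>i. l i \<ge> 0"
  shows "ULC (es l I)"
  using assms(1)
proof (induction I rule: finite_induct)
  case empty
  show ?case unfolding ULC_def es_empty by auto
next
  case (insert y I)
  show ?case
  proof (rule ULC_step[OF insert.IH])
    show "0 \<le> l y" using lpos by simp
    show "es l (insert y I) 0 = es l I 0" using insert.hyps by (simp add: es_zero)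
    show "\<And>j. es l (insert y I) (Suc j) = es l I (Suc j) + l y * es l I j"
      using insert.hyps by (rule es_insert)
  qed
qed

lemma cp_span:
  fixes v :: "'a::euclidean_space"
  shows "closest_point (span X) v \<in> span X \<and> (\<forall>w\<in>span X. (v - closest_point (span X) v) \<bullet> w = 0)"
proof -
  obtain y z where y: "y \<in> span X" and z: "\<And>w. w \<in> span X \<Longrightarrow> orthogonal z w" and v: "v = y + z"
    using orthogonal_subspace_decomp_exists by metis
  have "y = closest_point (span X) v"
  proof (rule closest_point_unique)
    show "convex (span X)" by (rule subspace_imp_convex[OF subspace_span])
    show "closed (span X)" by (rule closed_subspace[OF subspace_span])
    show "y \<in> span X" by (rule y)
    show "\<forall>w\<in>span X. dist v y \<le> dist v w"
    proof
      fix w assume w: "w \<in> span X"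
      have "y - w \<in> span X" using y w by (simp add: span_diff)
      then have o: "orthogonal z (y - w)" by (rule z)
      have "(dist v w)^2 = (norm (z + (y - w)))^2" by (simp add: v dist_norm algebra_simps)
      also have "\<dots> = (norm z)^2 + (norm (y - w))^2" using o by (rule norm_add_Pythagorean)
      finally have "(dist v y)^2 \<le> (dist v w)^2" by (simp add: v dist_norm)
      then show "dist v y \<le> dist v w" by (simp add: power2_le_iff_abs_le)
    qed
  qed
  then show ?thesis using y z v by (auto simp: orthogonal_def)
qed

lemma row_unit_det:
  fixes M :: "real^'n^'n"
  assumes "\<forall>b. M $ i $ b = (if b = i then 1 else 0)"
  shows "det M = det (\<chi> a b. if b = i then (if a = i then 1 else 0) else M $ a $ b)"
  unfolding det_def
proof (rule sum.cong[OF refl])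
  fix p assume "p \<in> {p. p permutes (UNIV::'n set)}"
  then have p: "p permutes (UNIV::'n set)" by simp
  let ?N = "(\<chi> a b. if b = i then (if a = i then 1 else 0) else M $ a $ b) :: real^'n^'n"
  show "of_int (sign p) * (\<Prod>k\<in>UNIV. M $ k $ p k) = of_int (sign p) * (\<Prod>k\<in>UNIV. ?N $ k $ p k)"
  proof (cases "p i = i")
    case True
    have "?N $ k $ p k = M $ k $ p k" for k
    proof (cases "k = i")
      case True then show ?thesis using \<open>p i = i\<close> assms by simp
    next
      case False
      then have "p k \<noteq> i" using \<open>p i = i\<close> permutes_inj[OF p] by (metis injD)
      then show ?thesis by simp
    qed
    then show ?thesis by simp
  next
    case False
    have "M $ i $ p i = 0" using False assms by simp
    then have h1: "(\<Prod>k\<in>UNIV. M $ k $ p k) = 0" by (intro prod_zero) auto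
    have "?N $ i $ p i = 0" using False assms by simp
    then have ex: "\<exists>a\<in>UNIV. ?N $ a $ p a = 0" by blast
    have h2: "(\<Prod>k\<in>UNIV. ?N $ k $ p k) = 0" using ex by (intro prod_zero) (simp only: finite, assumption)
    show ?thesis by (simp only: h1 h2)
  qed
qed

lemma gram_entry:
  fixes A :: "real^'n^'m"
  shows "(transpose A ** A) $ a $ b = column a A \<bullet> column b A"
  by (simp add: matrix_matrix_mult_def transpose_def column_def inner_vec_def)

lemma pdet_insert:
  fixes A :: "real^'n^'m"
  assumes iS: "i \<notin> S"
  shows "pdet (transpose A ** A) (insert i S) =
           (norm (column i A - col_proj A S (column i A)))^2 * pdet (transpose A ** A) S"
proof -
  define K where "K = transpose A ** A"
  define X where "X = {column j A | j. j \<in> S}"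
  define p where "p = col_proj A S (column i A)"
  define r where "r = column i A - p"
  have pX: "p \<in> span X" and rorth: "\<And>w. w \<in> span X \<Longrightarrow> r \<bullet> w = 0"
    using cp_span[of X "column i A"] unfolding p_def r_def col_proj_def X_def by auto
  define T where "T = insert i S"
  define R where "R = Rm K T"
  define g :: "real^'m \<Rightarrow> real^'n" where "g u = (\<chi> b. if b \<in> T then u \<bullet> column b A else 0)" for u
  have lin: "linear g"
    by (rule linearI) (simp_all add: g_def vec_eq_iff inner_add_left)
  have Kent: "K $ a $ b = column a A \<bullet> column b A" for a b unfolding K_def by (rule gram_entry)
  have rowR: "row j R = g (column j A)" if "j \<in> T" for j
    using that by (auto simp: row_def R_def Rm_def g_def Kent vec_eq_iff)
  have "g ` X \<subseteq> {row j R | j. j \<noteq> i}"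
  proof
    fix x assume "x \<in> g ` X"
    then obtain j where j: "j \<in> S" "x = g (column j A)" unfolding X_def by auto
    then have "x = row j R" "j \<noteq> i" using rowR[of j] iS unfolding T_def by auto
    then show "x \<in> {row j R | j. j \<noteq> i}" by blast
  qed
  then have "span (g ` X) \<subseteq> span {row j R | j. j \<noteq> i}" by (rule span_mono)
  moreover have "g p \<in> span (g ` X)" using pX span_linear_image[OF lin, of X] by auto
  ultimately have "- g p \<in> span {row j R | j. j \<noteq> i}" by (auto intro: span_neg)
  then have "- g p \<in> vec.span {row j R | j. j \<noteq> i}" by (simp add: span_vec_eq)
  then have d1: "det (\<chi> k. if k = i then row i R + (- g p) else row k R) = det R"
    by (rule det_row_span)
  define e :: "real^'n" where "e = (\<chi> b. if b = i then 1 else 0)"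
  have "row i R + (- g p) = g r"
    using rowR[of i] lin unfolding T_def r_def by (simp add: linear_diff)
  also have "g r = (r \<bullet> r) *s e"
  proof -
    have "g r $ b = ((r \<bullet> r) *s e) $ b" for b
    proof (cases "b = i")
      case True
      have "r \<bullet> column i A = r \<bullet> (r + p)" by (simp add: r_def)
      also have "\<dots> = r \<bullet> r" using rorth[OF pX] by (simp add: inner_add_right)
      finally show ?thesis using True by (simp add: g_def e_def T_def)
    next
      case False
      show ?thesis
      proof (cases "b \<in> S")
        case True
        have "column b A \<in> span X" unfolding X_def using True by (auto intro: span_base)
        then show ?thesis using False True rorth by (simp add: g_def e_def T_def)
      next
        case False
        then show ?thesis using \<open>b \<noteq> i\<close> by (simp add: g_def e_def T_def)
      qed
    qed
    then show ?thesis by (simp add: vec_eq_iff)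
  qed
  finally have eqrow: "row i R + (- g p) = (r \<bullet> r) *s e" .
  have "det R = det (\<chi> k. if k = i then (r \<bullet> r) *s e else row k R)" using d1 unfolding eqrow by simp
  also have "\<dots> = (r \<bullet> r) * det (\<chi> k. if k = i then e else row k R)"
    by (rule det_row_mul)
  also have "det (\<chi> k. if k = i then e else row k R) =
       det (\<chi> a b. if b = i then (if a = i then 1 else 0) else (\<chi> k. if k = i then e else row k R) $ a $ b)"
    by (rule row_unit_det) (simp add: e_def)
  also have "(\<chi> a b. if b = i then (if a = i then 1 else 0) else (\<chi> k. if k = i then e else row k R) $ a $ b)
      = Rm K S"
    using iS by (auto simp: vec_eq_iff Rm_def e_def row_def R_def T_def)
  finally have "det R = (r \<bullet> r) * det (Rm K S)" .
  then show ?thesis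
    unfolding K_def[symmetric] pdet_Rm R_def T_def r_def p_def by (simp add: power2_norm_eq_inner)
qed

lemma norm_sq_vec: "(norm (v::real^'m))^2 = (\<Sum>r\<in>UNIV. (v $ r)^2)"
  unfolding power2_norm_eq_inner inner_vec_def by (simp add: power2_eq_square)

lemma Er_formula:
  fixes A :: "real^'n^'m"
  shows "Er A S = (\<Sum>c\<in>UNIV. (norm (column c A - col_proj A S (column c A)))^2)"
proof -
  have "Er A S = (\<Sum>r\<in>UNIV. \<Sum>c\<in>UNIV. ((column c A - col_proj A S (column c A)) $ r)^2)"
    unfolding Er_def frob_sq_def proj_mat_def by (simp add: column_def)
  also have "\<dots> = (\<Sum>c\<in>UNIV. \<Sum>r\<in>UNIV. ((column c A - col_proj A S (column c A)) $ r)^2)"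
    by (rule sum.swap)
  also have "\<dots> = (\<Sum>c\<in>UNIV. (norm (column c A - col_proj A S (column c A)))^2)"
    by (simp add: norm_sq_vec)
  finally show ?thesis .
qed

lemma col_proj_in:
  fixes A :: "real^'n^'m"
  assumes "c \<in> S"
  shows "col_proj A S (column c A) = column c A"
proof -
  have "column c A \<in> span {column j A | j. j \<in> S}" using assms by (auto intro: span_base)
  then show ?thesis unfolding col_proj_def by (rule closest_point_self)
qed

lemma pdet_gram_nonneg:
  fixes A :: "real^'n^'m"
  shows "pdet (transpose A ** A) S \<ge> 0"
proof -
  have "finite S" by simp
  then show ?thesis
  proof (induction S rule: finite_induct)
    case empty then show ?case by (simp add: pdet_empty)
  next
    case (insert i S)
    then show ?case by (simp add: pdet_insert)
  qed
qed

lemma double_count: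
  fixes h :: "'n::finite set \<Rightarrow> real"
  shows "(\<Sum>S | card S = j. \<Sum>c\<in>UNIV - S. h (insert c S)) = real (Suc j) * (\<Sum>T | card T = Suc j. h T)"
proof -
  have "(\<Sum>S | card S = j. \<Sum>c\<in>UNIV - S. h (insert c S)) = (\<Sum>(S, c)\<in>Sigma {S. card S = j} (\<lambda>S. UNIV - S). h (insert c S))"
    by (rule sum.Sigma) auto
  also have "\<dots> = (\<Sum>(T, c)\<in>Sigma {T. card T = Suc j} (\<lambda>T. T). h T)"
  proof (rule sum.reindex_bij_witness[where j = "\<lambda>(S, c). (insert c S, c)" and i = "\<lambda>(T, c). (T - {c}, c)"])
    fix a assume "a \<in> Sigma {S::'n set. card S = j} (\<lambda>S. UNIV - S)"
    then obtain S c where a: "a = (S, c)" "card S = j" "c \<notin> S" by auto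
    show "(case case a of (S, c) \<Rightarrow> (insert c S, c) of (T, c) \<Rightarrow> (T - {c}, c)) = a" using a by auto
    show "(case a of (S, c) \<Rightarrow> (insert c S, c)) \<in> Sigma {T. card T = Suc j} (\<lambda>T. T)" using a by auto
    show "(case case a of (S, c) \<Rightarrow> (insert c S, c) of (T, c) \<Rightarrow> h T) = (case a of (S, c) \<Rightarrow> h (insert c S))"
      using a by auto
  next
    fix b assume "b \<in> Sigma {T::'n set. card T = Suc j} (\<lambda>T. T)"
    then obtain T c where b: "b = (T, c)" "card T = Suc j" "c \<in> T" by auto
    show "(case case b of (T, c) \<Rightarrow> (T - {c}, c) of (S, c) \<Rightarrow> (insert c S, c)) = b" using b by auto
    show "(case b of (T, c) \<Rightarrow> (T - {c}, c)) \<in> Sigma {S. card S = j} (\<lambda>S. UNIV - S)" using b by auto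
  qed
  also have "\<dots> = (\<Sum>T | card T = Suc j. \<Sum>c\<in>T. h T)"
    by (rule sum.Sigma[symmetric]) auto
  also have "\<dots> = (\<Sum>T | card T = Suc j. real (Suc j) * h T)"
    by (rule sum.cong) auto
  also have "\<dots> = real (Suc j) * (\<Sum>T | card T = Suc j. h T)"
    by (simp add: sum_distrib_left)
  finally show ?thesis .
qed

lemma key_identity:
  fixes A :: "real^'n^'m"
  shows "(\<Sum>S | card S = j. pdet (transpose A ** A) S * Er A S)
       = real (Suc j) * (\<Sum>T | card T = Suc j. pdet (transpose A ** A) T)"
proof -
  let ?K = "transpose A ** A"
  let ?d = "\<lambda>S c. (norm (column c A - col_proj A S (column c A)))^2"
  have "pdet ?K S * Er A S = (\<Sum>c\<in>UNIV - S. pdet ?K (insert c S))" for S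
  proof -
    have "pdet ?K S * Er A S = (\<Sum>c\<in>UNIV. pdet ?K S * ?d S c)"
      by (simp add: Er_formula sum_distrib_left)
    also have "\<dots> = (\<Sum>c\<in>UNIV - S. pdet ?K S * ?d S c)"
      by (rule sum.mono_neutral_right) (auto simp: col_proj_in)
    also have "\<dots> = (\<Sum>c\<in>UNIV - S. pdet ?K (insert c S))"
      by (rule sum.cong) (auto simp: pdet_insert)
    finally show ?thesis .
  qed
  then have "(\<Sum>S | card S = j. pdet ?K S * Er A S) = (\<Sum>S | card S = j. \<Sum>c\<in>UNIV - S. pdet ?K (insert c S))"
    by simp
  also have "\<dots> = real (Suc j) * (\<Sum>T | card T = Suc j. pdet ?K T)"
    by (rule double_count)
  finally show ?thesis .
qed

lemma ULC_mono:
  assumes U: "ULC e"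
  shows "real (Suc (j + d)) * e (Suc (j + d)) * e j \<le> real (Suc j) * e (Suc j) * e (j + d)"
proof (induction d)
  case 0 then show ?case by simp
next
  case (Suc d)
  have epos: "\<And>i. e i \<ge> 0" and H: "\<And>i. real (i+1) * (e (i+1))^2 \<ge> real (i+2) * e i * e (i+2)"
    and Z: "\<And>i. e i = 0 \<Longrightarrow> e (Suc i) = 0" using U unfolding ULC_def by auto
  define k where "k = j + d"
  define Fj where "Fj = real (Suc j) * e (Suc j)"
  have IH: "real (Suc k) * e (Suc k) * e j \<le> Fj * e k" using Suc.IH by (simp add: k_def Fj_def)
  have N: "real (k+1) * (e (k+1))^2 \<ge> real (k+2) * e k * e (k+2)" by (rule H)
  have goal_eq: "j + Suc d = Suc k" by (simp add: k_def)
  show ?case unfolding goal_eq Fj_def[symmetric]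
  proof (cases "e k = 0")
    case True
    then have "e (Suc k) = 0" by (rule Z)
    then have "e (Suc (Suc k)) = 0" by (rule Z)
    then show "real (Suc (Suc k)) * e (Suc (Suc k)) * e j \<le> Fj * e (Suc k)"
      using \<open>e (Suc k) = 0\<close> by simp
  next
    case False
    then have ek: "e k > 0" using epos[of k] by simp
    have "e k * (real (Suc (Suc k)) * e (Suc (Suc k)) * e j) = (real (k+2) * e k * e (k+2)) * e j"
      by (simp add: algebra_simps)
    also have "\<dots> \<le> (real (k+1) * (e (k+1))^2) * e j"
      using N epos[of j] by (rule mult_right_mono)
    also have "\<dots> = (real (Suc k) * e (Suc k) * e j) * e (Suc k)"
      by (simp add: power2_eq_square algebra_simps)
    also have "\<dots> \<le> (Fj * e k) * e (Suc k)"
      using IH epos[of "Suc k"] by (rule mult_right_mono)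
    also have "\<dots> = e k * (Fj * e (Suc k))" by (simp add: algebra_simps)
    finally show "real (Suc (Suc k)) * e (Suc (Suc k)) * e j \<le> Fj * e (Suc k)"
      using ek by (simp add: mult_le_cancel_left_pos)
  qed
qed

lemma ULC_mono':
  assumes U: "ULC e" and jk: "j \<le> k"
  shows "real (Suc k) * e (Suc k) * e j \<le> real (Suc j) * e (Suc j) * e k"
proof -
  obtain d where "k = j + d" using jk le_Suc_ex by blast
  then show ?thesis using ULC_mono[OF U, of j d] by simp
qed

lemma group_card:
  fixes g :: "'n::finite set \<Rightarrow> real"
  shows "(\<Sum>S | card S \<le> k. f (card S) * g S) = (\<Sum>j\<le>k. f j * (\<Sum>S | card S = j. g S))"
proof -
  have "(\<Sum>S | card S \<le> k. f (card S) * g S) = (\<Sum>j\<in>{..k}. \<Sum>S\<in>{S\<in>{S. card S \<le> k}. card S = j}. f (card S) * g S)"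
    by (rule sum.group[symmetric]) auto
  also have "\<dots> = (\<Sum>j\<le>k. f j * (\<Sum>S | card S = j. g S))"
  proof (rule sum.cong[OF refl])
    fix j assume "j \<in> {..k}"
    then have "(\<Sum>S\<in>{S\<in>{S::'n set. card S \<le> k}. card S = j}. f (card S) * g S) = (\<Sum>S | card S = j. f j * g S)"
      by (intro sum.cong) auto
    then show "(\<Sum>S\<in>{S\<in>{S::'n set. card S \<le> k}. card S = j}. f (card S) * g S) = f j * (\<Sum>S | card S = j. g S)"
      by (simp add: sum_distrib_left)
  qed
  finally show ?thesis .
qed

theorem lemma3:
  fixes A :: "real^'n^'m" and k :: nat and \<alpha> :: real
  assumes "1 \<le> k" and "k \<le> CARD('n)" and "\<alpha> > 0"
  shows "kdpp_expect k (transpose A ** A) (Er A)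
           \<le> dpp_cond_expect_le k ((1 / \<alpha>) *\<^sub>R (transpose A ** A)) (Er A)"
proof -
  define K where "K = transpose A ** A"
  define \<beta> where "\<beta> = 1 / \<alpha>"
  have \<beta>: "\<beta> > 0" using assms(3) by (simp add: \<beta>_def)
  define e where "e j = (\<Sum>T | card T = j. pdet K T)" for j
  define F where "F j = (\<Sum>S | card S = j. pdet K S * Er A S)" for j
  have Fe: "F j = real (Suc j) * e (Suc j)" for j
    unfolding F_def e_def K_def by (rule key_identity)
  obtain l :: "'n \<Rightarrow> real" where l: "\<forall>i. 0 \<le> l i"
    and el: "\<forall>j. (\<Sum>T | card T = j. pdet K T) = (\<Sum>T | card T = j. \<Prod>i\<in>T. l i)"
    using esym_gram[of A] unfolding K_def by blast
  have "e = es l UNIV" unfolding e_def es_def using el by (simp add: fun_eq_iff)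
  then have U: "ULC e" using es_ULC[of UNIV l] l by simp
  then have epos: "\<And>i. e i \<ge> 0" and e0: "e 0 = 1" unfolding ULC_def by auto
  have Fpos: "F j \<ge> 0" for j using epos by (simp add: Fe)
  have mono: "F k * e j \<le> F j * e k" if "j \<le> k" for j
    using ULC_mono'[OF U that] by (simp add: Fe)
  have LHS: "kdpp_expect k K (Er A) = F k / e k"
  proof -
    have "kdpp_expect k K (Er A) = (\<Sum>S | card S = k. pdet K S * Er A S / e k)"
      unfolding kdpp_expect_def kdpp_prob_def e_def by (intro sum.cong refl) auto
    also have "\<dots> = F k / e k" unfolding F_def by (simp add: sum_divide_distrib)
    finally show ?thesis .
  qed
  define K' where "K' = \<beta> *\<^sub>R K"
  define Dt where "Dt = det (mat 1 + K')"
  have pK': "pdet K' S = \<beta> ^ card S * pdet K S" for S unfolding K'_def by (rule pdet_scale)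
  have pKpos: "pdet K S \<ge> 0" for S unfolding K_def by (rule pdet_gram_nonneg)
  have Dt: "Dt > 0"
  proof -
    have "Dt = (\<Sum>T\<in>Pow UNIV. pdet K' T)" unfolding Dt_def by (rule det_I_plus)
    also have "\<dots> \<ge> pdet K' {}"
      by (rule member_le_sum) (auto simp: pK' pKpos \<beta> less_imp_le)
    finally show ?thesis by (simp add: pdet_empty)
  qed
  define N where "N = (\<Sum>j\<le>k. \<beta> ^ j * F j)"
  define D where "D = (\<Sum>j\<le>k. \<beta> ^ j * e j)"
  have num: "(\<Sum>S | card S \<le> k. dpp_prob K' S * Er A S) = N / Dt"
  proof -
    have "(\<Sum>S | card S \<le> k. dpp_prob K' S * Er A S) = (\<Sum>S | card S \<le> k. \<beta> ^ card S * (pdet K S * Er A S)) / Dt"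
      unfolding dpp_prob_def Dt_def[symmetric] pK' by (simp add: sum_divide_distrib algebra_simps)
    also have "\<dots> = N / Dt" unfolding N_def F_def
      using group_card[of "\<lambda>j. \<beta> ^ j" "\<lambda>S. pdet K S * Er A S" k] by simp
    finally show ?thesis .
  qed
  have den: "(\<Sum>S | card S \<le> k. dpp_prob K' S) = D / Dt"
  proof -
    have "(\<Sum>S | card S \<le> k. dpp_prob K' S) = (\<Sum>S | card S \<le> k. \<beta> ^ card S * pdet K S) / Dt"
      unfolding dpp_prob_def Dt_def[symmetric] pK' by (simp add: sum_divide_distrib)
    also have "\<dots> = D / Dt" unfolding D_def e_def
      using group_card[of "\<lambda>j. \<beta> ^ j" "\<lambda>S. pdet K S" k] by simp
    finally show ?thesis .
  qed
  have RHS: "dpp_cond_expect_le k K' (Er A) = N / D"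
    unfolding dpp_cond_expect_le_def num den using Dt by simp
  have Dpos: "D > 0"
  proof -
    have "D = \<beta> ^ 0 * e 0 + (\<Sum>j\<in>{1..k}. \<beta> ^ j * e j)"
      unfolding D_def by (simp add: atMost_atLeast0 sum.atLeast_Suc_atMost)
    moreover have "(\<Sum>j\<in>{1..k}. \<beta> ^ j * e j) \<ge> 0" using epos \<beta> by (intro sum_nonneg) simp
    ultimately show ?thesis using e0 by simp
  qed
  have Npos: "N \<ge> 0" unfolding N_def using Fpos \<beta> by (intro sum_nonneg) simp
  have main: "F k / e k \<le> N / D"
  proof (cases "e k = 0")
    case True
    then show ?thesis using Npos Dpos by simp
  next
    case False
    then have ek: "e k > 0" using epos[of k] by simp
    have "F k * D = (\<Sum>j\<le>k. \<beta> ^ j * (F k * e j))" unfolding D_def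
      by (simp add: sum_distrib_left algebra_simps)
    also have "\<dots> \<le> (\<Sum>j\<le>k. \<beta> ^ j * (F j * e k))"
      using mono \<beta> by (intro sum_mono mult_left_mono) auto
    also have "\<dots> = (\<Sum>j\<le>k. \<beta> ^ j * F j) * e k" by (simp add: sum_distrib_right mult.assoc)
    also have "\<dots> = N * e k" unfolding N_def ..
    finally have "F k * D \<le> N * e k" .
    then show ?thesis using ek Dpos by (simp add: divide_le_eq le_divide_eq mult.commute mult.left_commute)
  qed
  show ?thesis using main LHS RHS unfolding K_def K'_def \<beta>_def by simp
qed

end
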